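(* For every $n\ge1$, $\langle r\rangle_{\mathrm{H}_n}=\frac{1}{2^nn!}\sum_{\sigma\in\mathrm{H}_n}r(\lambda_\sigma)=1$.
   Context: Signed factorization types: finitely supported $\lambda\colon\mathbb{N}\times\mathbb{N}\times\{1,-1,0\}\to\mathbb{Z}_{\ge0}$. $r(\lambda)=\prod_{d,e}(e+1)^{\lambda(d,e,1)}$ if $\lambda(d,e,-1)=0$ for all $d$ and all odd $e$, and $r(\lambda)=0$ otherwise. $\mathrm{H}_n=\mathbb{F}_2^n\rtimes S_n$ ($S_n$ permuting coordinates), elements $\sigma=x\tau$; $\lambda_\sigma(d,1,s)$ is the number of orbits $\Omega$ of $\tau$ on $\{1,\dots,n\}$ with $\#\Omega=d$ and $(-1)^{\sum_{i\in\Omega}x_i}=s$, and $\lambda_\sigma(d,e,s)=0$ for $e\ne1$. *)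

theory Defs
  imports Complex_Main "HOL-Combinatorics.Permutations" "HOL-Combinatorics.Orbits"
begin

text \<open>Signed factorization types: functions
  lam :: nat \<Rightarrow> nat \<Rightarrow> int \<Rightarrow> nat, lam d e s, with d, e \<in> \<nat> and s \<in> {1,-1,0}
  (values at other s are irrelevant for the statement).\<close>

type_synonym sftype = "nat \<Rightarrow> nat \<Rightarrow> int \<Rightarrow> nat"

definition r_fun :: "sftype \<Rightarrow> nat" where
  "r_fun lam =
     (if \<forall>d e. odd e \<longrightarrow> lam d e (-1) = 0
      then (\<Prod>(d, e) \<in> {(d, e). lam d e 1 \<noteq> 0}. (e + 1) ^ lam d e 1)
      else 0)"

text \<open>The hyperoctahedral group H_n = F_2^n \<rtimes> S_n, elements sigma = x tau,
  represented as pairs (x, tau) with x \<in> {1..n} \<rightarrow> {0,1} (extensional) and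
  tau a permutation of {1..n}.\<close>

definition hyperoct :: "nat \<Rightarrow> ((nat \<Rightarrow> nat) \<times> (nat \<Rightarrow> nat)) set" where
  "hyperoct n = {(x, \<tau>). x \<in> {1..n} \<rightarrow>\<^sub>E {0, 1} \<and> \<tau> permutes {1..n}}"

definition perm_orbits :: "nat \<Rightarrow> (nat \<Rightarrow> nat) \<Rightarrow> nat set set" where
  "perm_orbits n \<tau> = (\<lambda>i. orbit \<tau> i) ` {1..n}"

definition lambda_sigma :: "nat \<Rightarrow> (nat \<Rightarrow> nat) \<times> (nat \<Rightarrow> nat) \<Rightarrow> sftype" where
  "lambda_sigma n \<sigma> d e s =
     (if e = 1 then
        card {\<Omega> \<in> perm_orbits n (snd \<sigma>).
                card \<Omega> = d \<and> (-1::int) ^ (\<Sum>i\<in>\<Omega>. fst \<sigma> i) = s}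
      else 0)"

end

theory Submission
  imports Defs
begin

lemma count_even:
  fixes A :: "nat set" and P :: "nat set set"
  assumes finA: "finite A" and finP: "finite P"
    and sub: "\<And>W. W \<in> P \<Longrightarrow> W \<subseteq> A"
    and ne: "\<And>W. W \<in> P \<Longrightarrow> W \<noteq> {}"
    and disj: "\<And>W W'. W \<in> P \<Longrightarrow> W' \<in> P \<Longrightarrow> W \<inter> W' \<noteq> {} \<Longrightarrow> W = W'"
  shows "card {x \<in> A \<rightarrow>\<^sub>E {0,1::nat}. \<forall>W\<in>P. even (\<Sum>i\<in>W. x i)} * 2 ^ card P = 2 ^ card A"
proof -
  define rep where "rep W = (SOME a. a \<in> W)" for W :: "nat set"
  have rep: "rep W \<in> W" if "W \<in> P" for W
    using ne[OF that] unfolding rep_def by (simp add: some_in_eq)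
  define v where "v t i = (\<Sum>W\<in>P. if i = rep W then t W else 0)" for t :: "nat set \<Rightarrow> nat" and i :: nat
  define xo where "xo t x = restrict (\<lambda>i. (x i + v t i) mod 2) A" for t x
  define par where "par x = restrict (\<lambda>W. (\<Sum>i\<in>W. x i) mod 2) P" for x :: "nat \<Rightarrow> nat"
  define G where "G = {x \<in> A \<rightarrow>\<^sub>E {0,1::nat}. \<forall>W\<in>P. even (\<Sum>i\<in>W. x i)}"
  have finW: "finite W" if "W \<in> P" for W using sub[OF that] finA finite_subset by blast
  have vsum: "(\<Sum>i\<in>W. v t i) = t W" if W: "W \<in> P" for W t
  proof -
    have "(\<Sum>i\<in>W. v t i) = (\<Sum>W'\<in>P. \<Sum>i\<in>W. if i = rep W' then t W' else 0)"
      unfolding v_def by (rule sum.swap)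
    also have "\<dots> = (\<Sum>W'\<in>P. if rep W' \<in> W then t W' else 0)"
      using finW[OF W] by (simp add: sum.delta')
    also have "\<dots> = (\<Sum>W'\<in>P. if W' = W then t W' else 0)"
    proof (rule sum.cong)
      fix W' assume W': "W' \<in> P"
      have "rep W' \<in> W \<longleftrightarrow> W' = W"
        using rep[OF W'] rep[OF W] disj[OF W W'] by blast
      then show "(if rep W' \<in> W then t W' else 0) = (if W' = W then t W' else 0)" by simp
    qed simp
    also have "\<dots> = t W" using finP W by (simp add: sum.delta')
    finally show ?thesis .
  qed
  have xsum: "(\<Sum>i\<in>W. xo t x i) mod 2 = ((\<Sum>i\<in>W. x i) + t W) mod 2" if W: "W \<in> P" for W t x
  proof -
    have "(\<Sum>i\<in>W. xo t x i) = (\<Sum>i\<in>W. (x i + v t i) mod 2)"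
      using sub[OF W] by (intro sum.cong) (auto simp: xo_def)
    then have "(\<Sum>i\<in>W. xo t x i) mod 2 = (\<Sum>i\<in>W. x i + v t i) mod 2"
      by (simp add: mod_sum_eq)
    also have "\<dots> = ((\<Sum>i\<in>W. x i) + t W) mod 2"
      by (simp add: sum.distrib vsum[OF W])
    finally show ?thesis .
  qed
  have xoPi: "xo t x \<in> A \<rightarrow>\<^sub>E {0,1}" for t x
    by (auto simp: xo_def)
  have invol: "xo t (xo t x) = x" if x: "x \<in> A \<rightarrow>\<^sub>E {0,1}" for t x
  proof
    fix i show "xo t (xo t x) i = x i"
    proof (cases "i \<in> A")
      case True
      then have "x i \<in> {0,1}" using x by auto
      moreover have "(((x i + v t i) mod 2) + v t i) mod 2 = x i mod 2" by presburger
      ultimately show ?thesis using True by (auto simp: xo_def)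
    next
      case False
      then show ?thesis using x by (simp add: xo_def PiE_def extensional_def)
    qed
  qed
  have parPi: "par x \<in> P \<rightarrow>\<^sub>E {0::nat,1}" for x by (auto simp: par_def)
  have bij: "bij_betw (\<lambda>x. (xo (par x) x, par x)) (A \<rightarrow>\<^sub>E {0,1}) (G \<times> (P \<rightarrow>\<^sub>E {0::nat,1}))"
  proof (rule bij_betw_byWitness[where f' = "\<lambda>(y, t). xo t y"])
    show "\<forall>a\<in>A \<rightarrow>\<^sub>E {0, 1}. (case (xo (par a) a, par a) of (y, t) \<Rightarrow> xo t y) = a"
      using invol by simp
    show "\<forall>a'\<in>G \<times> (P \<rightarrow>\<^sub>E {0::nat, 1}). (\<lambda>x. (xo (par x) x, par x)) (case a' of (y, t) \<Rightarrow> xo t y) = a'"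
    proof
      fix a' assume a': "a' \<in> G \<times> (P \<rightarrow>\<^sub>E {0::nat, 1})"
      then obtain y and t :: "nat set \<Rightarrow> nat" where yt: "a' = (y, t)" "y \<in> G" "t \<in> P \<rightarrow>\<^sub>E {0, 1}" by auto
      have "par (xo t y) = t"
      proof
        fix W show "par (xo t y) W = t W"
        proof (cases "W \<in> P")
          case True
          have ev: "even (\<Sum>i\<in>W. y i)" using yt(2) True by (auto simp: G_def)
          have "t W \<in> {0,1}" using yt(3) True by auto
          then show ?thesis using True xsum[OF True, of t y] ev
            by (auto simp: par_def)
        next
          case False then show ?thesis using yt(3) by (simp add: par_def PiE_def extensional_def)
        qed
      qed
      moreover have "xo t (xo t y) = y" using yt(2) invol by (auto simp: G_def)
      ultimately show "(\<lambda>x. (xo (par x) x, par x)) (case a' of (y, t) \<Rightarrow> xo t y) = a'"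
        using yt(1) by simp
    qed
    show "(\<lambda>x. (xo (par x) x, par x)) ` (A \<rightarrow>\<^sub>E {0, 1}) \<subseteq> G \<times> (P \<rightarrow>\<^sub>E {0::nat, 1})"
    proof (rule image_subsetI)
      fix x assume x: "x \<in> A \<rightarrow>\<^sub>E {0::nat, 1}"
      have "even (\<Sum>i\<in>W. xo (par x) x i)" if W: "W \<in> P" for W
      proof -
        have "(\<Sum>i\<in>W. xo (par x) x i) mod 2 = ((\<Sum>i\<in>W. x i) + (\<Sum>i\<in>W. x i) mod 2) mod 2"
          using xsum[OF W] W by (simp add: par_def)
        also have "\<dots> = 0" by presburger
        finally show ?thesis by presburger
      qed
      then show "(xo (par x) x, par x) \<in> G \<times> (P \<rightarrow>\<^sub>E {0::nat, 1})"
        using xoPi parPi by (simp add: G_def)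
    qed
    show "(\<lambda>(y, t). xo t y) ` (G \<times> (P \<rightarrow>\<^sub>E {0::nat, 1})) \<subseteq> A \<rightarrow>\<^sub>E {0, 1}"
    proof (rule image_subsetI)
      fix p :: "(nat \<Rightarrow> nat) \<times> (nat set \<Rightarrow> nat)"
      show "(case p of (y, t) \<Rightarrow> xo t y) \<in> A \<rightarrow>\<^sub>E {0, 1}"
        by (cases p) (simp only: prod.case xoPi)
    qed
  qed
  have "card (A \<rightarrow>\<^sub>E {0::nat,1}) = card G * card (P \<rightarrow>\<^sub>E {0::nat,1})"
    using bij_betw_same_card[OF bij] by (simp add: card_cartesian_product)
  moreover have "card (A \<rightarrow>\<^sub>E {0::nat,1}) = 2 ^ card A" using finA by (simp add: card_PiE numeral_2_eq_2)
  moreover have "card (P \<rightarrow>\<^sub>E {0::nat,1}) = 2 ^ card P" using finP by (simp add: card_PiE numeral_2_eq_2)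
  ultimately show ?thesis by (simp add: G_def)
qed


lemma neg1_pow: "((-1::int) ^ k = -1) \<longleftrightarrow> odd k" "((-1::int) ^ k = 1) \<longleftrightarrow> even k"
  by (cases "even k"; simp)+

lemma r_val:
  assumes finP: "finite (perm_orbits n \<tau>)"
  shows "r_fun (lambda_sigma n (x, \<tau>)) =
    (if \<forall>W\<in>perm_orbits n \<tau>. even (\<Sum>i\<in>W. x i) then 2 ^ card (perm_orbits n \<tau>) else 0)"
proof -
  define P where "P = perm_orbits n \<tau>"
  have fin: "finite P" using finP by (simp add: P_def)
  have L: "lambda_sigma n (x, \<tau>) d e s =
      (if e = 1 then card {W\<in>P. card W = d \<and> (-1::int) ^ (\<Sum>i\<in>W. x i) = s} else 0)" for d e s
    by (simp add: lambda_sigma_def P_def)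
  show ?thesis
  proof (cases "\<forall>W\<in>P. even (\<Sum>i\<in>W. x i)")
    case True
    have cond: "\<forall>d e. odd e \<longrightarrow> lambda_sigma n (x, \<tau>) d e (-1) = 0"
    proof -
      have e: "{W\<in>P. card W = d' \<and> odd (\<Sum>i\<in>W. x i)} = {}" for d' using True by auto
      show ?thesis by (simp add: L neg1_pow e)
    qed
    have L1: "lambda_sigma n (x, \<tau>) d e 1 = (if e = 1 then card {W\<in>P. card W = d} else 0)" for d e
    proof -
      have e: "{W\<in>P. card W = d' \<and> odd (\<Sum>i\<in>W. x i)} = {}" for d' using True by auto
      have "{W\<in>P. card W = d \<and> (-1::int) ^ (\<Sum>i\<in>W. x i) = 1} = {W\<in>P. card W = d}"
        using True by (auto simp: neg1_pow)
      then show ?thesis by (simp add: L)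
    qed
    have S: "{(d, e). lambda_sigma n (x, \<tau>) d e 1 \<noteq> 0} = (\<lambda>d. (d, 1::nat)) ` (card ` P)"
    proof -
      have "card {W\<in>P. card W = d} \<noteq> 0 \<longleftrightarrow> d \<in> card ` P" for d
        using fin by auto
      then show ?thesis by (auto simp: L1 split: if_splits)
    qed
    have "r_fun (lambda_sigma n (x, \<tau>)) =
        (\<Prod>(d, e) \<in> (\<lambda>d. (d, 1::nat)) ` (card ` P). (e + 1) ^ lambda_sigma n (x, \<tau>) d e 1)"
      unfolding r_fun_def using cond S by simp
    also have "\<dots> = (\<Prod>d \<in> card ` P. 2 ^ card {W\<in>P. card W = d})"
      by (subst prod.reindex) (auto simp: inj_on_def L1 numeral_2_eq_2)
    also have "\<dots> = 2 ^ (\<Sum>d \<in> card ` P. card {W\<in>P. card W = d})"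
      by (simp add: power_sum)
    also have "(\<Sum>d \<in> card ` P. card {W\<in>P. card W = d}) = card P"
      using sum.group[OF fin finite_imageI[OF fin] subset_refl, of "\<lambda>_. 1::nat" card]
      by (simp add: card_eq_sum[symmetric])
    finally show ?thesis using True by (simp add: P_def)
  next
    case False
    then obtain W where W: "W \<in> P" "odd (\<Sum>i\<in>W. x i)" by auto
    have "W \<in> {V\<in>P. card V = card W \<and> (-1::int) ^ (\<Sum>i\<in>V. x i) = -1}"
      using W by (simp add: neg1_pow)
    then have "lambda_sigma n (x, \<tau>) (card W) 1 (-1) \<noteq> 0"
      using fin by (simp add: L card_eq_0_iff) blast
    then have "\<not> (\<forall>d e. odd e \<longrightarrow> lambda_sigma n (x, \<tau>) d e (-1) = 0)" by force
    then have "r_fun (lambda_sigma n (x, \<tau>)) = 0" unfolding r_fun_def by (simp only: if_False)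
    then show ?thesis using False by (simp add: P_def)
  qed
qed


lemma inner_sum:
  assumes perm: "\<tau> permutes {1..n}"
  shows "(\<Sum>x\<in>{1..n} \<rightarrow>\<^sub>E {0,1::nat}. r_fun (lambda_sigma n (x, \<tau>))) = 2 ^ n"
proof -
  define P where "P = perm_orbits n \<tau>"
  have finP: "finite P" by (simp add: P_def perm_orbits_def)
  have pm: "permutation \<tau>" using perm permutation_permutes by blast
  have self: "s \<in> orbit \<tau> s" for s using permutation_self_in_orbit[OF pm] .
  have sub: "W \<subseteq> {1..n}" if "W \<in> P" for W
    using that permutes_orbit_subset[OF perm] unfolding P_def perm_orbits_def by blast
  have ne: "W \<noteq> {}" if "W \<in> P" for W
    using that self unfolding P_def perm_orbits_def by blast
  have oeq: "orbit \<tau> y = orbit \<tau> a" if "y \<in> orbit \<tau> a" for y a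
  proof
    show "orbit \<tau> y \<subseteq> orbit \<tau> a" using that orbit_trans[of _ \<tau> y a] by blast
    have "a \<in> orbit \<tau> y" using orbit_swap[OF self that] .
    then show "orbit \<tau> a \<subseteq> orbit \<tau> y" using orbit_trans[of _ \<tau> a y] by blast
  qed
  have disj: "W = W'" if h1: "W \<in> P" and h2: "W' \<in> P" and h3: "W \<inter> W' \<noteq> {}" for W W'
  proof -
    obtain a b where "W = orbit \<tau> a" "W' = orbit \<tau> b"
      using h1 h2 unfolding P_def perm_orbits_def by blast
    moreover obtain y where "y \<in> W" "y \<in> W'" using h3 by blast
    ultimately show ?thesis using oeq by metis
  qed
  have "(\<Sum>x\<in>{1..n} \<rightarrow>\<^sub>E {0,1::nat}. r_fun (lambda_sigma n (x, \<tau>)))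
      = (\<Sum>x\<in>{1..n} \<rightarrow>\<^sub>E {0,1::nat}. if \<forall>W\<in>P. even (\<Sum>i\<in>W. x i) then 2 ^ card P else 0)"
  proof (rule sum.cong[OF refl])
    fix x show "r_fun (lambda_sigma n (x, \<tau>)) = (if \<forall>W\<in>P. even (\<Sum>i\<in>W. x i) then 2 ^ card P else 0)"
      using r_val[of n \<tau> x] finP unfolding P_def by blast
  qed
  also have "\<dots> = (\<Sum>x\<in>{x\<in>{1..n} \<rightarrow>\<^sub>E {0,1::nat}. \<forall>W\<in>P. even (\<Sum>i\<in>W. x i)}. 2 ^ card P)"
    by (rule sum.inter_filter[symmetric]) (simp add: finite_PiE)
  also have "\<dots> = card {x\<in>{1..n} \<rightarrow>\<^sub>E {0,1::nat}. \<forall>W\<in>P. even (\<Sum>i\<in>W. x i)} * 2 ^ card P"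
    by simp
  also have "\<dots> = 2 ^ card {1..n}"
    by (rule count_even[OF _ finP sub ne disj]) simp_all
  finally show ?thesis by simp
qed

theorem mainTheorem19:
  fixes n :: nat
  assumes "n \<ge> 1"
  shows "(1 / (2 ^ n * fact n)) * (\<Sum>\<sigma>\<in>hyperoct n. real (r_fun (lambda_sigma n \<sigma>))) = (1::real)"
proof -
  define A where "A = {1..n} \<rightarrow>\<^sub>E {0,1::nat}"
  define B where "B = {\<tau>. \<tau> permutes {1..n}}"
  have H: "hyperoct n = A \<times> B" by (auto simp: hyperoct_def A_def B_def)
  have fA: "finite A" by (simp add: A_def finite_PiE)
  have fB: "finite B" by (simp add: B_def finite_permutations)
  have "(\<Sum>\<sigma>\<in>hyperoct n. real (r_fun (lambda_sigma n \<sigma>)))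
      = (\<Sum>x\<in>A. \<Sum>\<tau>\<in>B. real (r_fun (lambda_sigma n (x, \<tau>))))"
    unfolding H by (subst sum.cartesian_product) (simp add: case_prod_unfold)
  also have "\<dots> = (\<Sum>\<tau>\<in>B. \<Sum>x\<in>A. real (r_fun (lambda_sigma n (x, \<tau>))))"
    by (rule sum.swap)
  also have "\<dots> = (\<Sum>\<tau>\<in>B. real (2 ^ n))"
  proof (rule sum.cong)
    fix \<tau> assume "\<tau> \<in> B"
    then have "(\<Sum>x\<in>A. r_fun (lambda_sigma n (x, \<tau>))) = 2 ^ n"
      using inner_sum by (simp add: A_def B_def)
    then show "(\<Sum>x\<in>A. real (r_fun (lambda_sigma n (x, \<tau>)))) = real (2 ^ n)"
      by (metis of_nat_sum)
  qed simp
  also have "\<dots> = fact n * 2 ^ n"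
    using card_permutations[of "{1..n}" n] by (simp add: B_def)
  finally have eq: "(\<Sum>\<sigma>\<in>hyperoct n. real (r_fun (lambda_sigma n \<sigma>))) = 2 ^ n * fact n"
    by (simp only: mult.commute)
  have nz: "(2::real) ^ n * fact n \<noteq> 0" by simp
  show ?thesis unfolding eq using left_inverse[OF nz] by (simp only: inverse_eq_divide)
qed

end
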